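(* Let $\delta>0$ and let $U\in C^1(-1,-1+\delta)$ satisfy $(1-x^2)U'+2xU+\frac12U^2=P_c(x)$ on $(-1,-1+\delta)$ for some $c_1,c_2,c_3\in\mathbb{R}$. Then $c_1\ge-1$, the limit $U(-1):=\lim_{x\to-1^+}U(x)$ exists and is finite, and $U(-1)=\tau_1(c_1)$ or $U(-1)=\tau_2(c_1)$.
   Context: $P_c(x):=c_1(1-x)+c_2(1+x)+c_3(1-x^2)$ for $c=(c_1,c_2,c_3)$. $\tau_1(c_1):=2-2\sqrt{1+c_1}$, $\tau_2(c_1):=2+2\sqrt{1+c_1}$. *)

theory Defs
  imports "HOL-Analysis.Analysis"
begin

definition P :: "real \<Rightarrow> real \<Rightarrow> real \<Rightarrow> real \<Rightarrow> real" where
  "P c1 c2 c3 x = c1 * (1 - x) + c2 * (1 + x) + c3 * (1 - x\<^sup>2)"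

definition tau1 :: "real \<Rightarrow> real" where
  "tau1 c1 = 2 - 2 * sqrt (1 + c1)"

definition tau2 :: "real \<Rightarrow> real" where
  "tau2 c1 = 2 + 2 * sqrt (1 + c1)"

end

theory Submission
  imports Defs "HOL-Real_Asymp.Real_Asymp"
begin

lemma ln_shift_bot: "filterlim (\<lambda>x::real. ln (1+x)) at_bot (at_right (-1))"
  by real_asymp

lemma drift:
  fixes f f' :: "real \<Rightarrow> real" and \<kappa> M :: real
  assumes k: "\<kappa> > 0"
    and ev: "eventually (\<lambda>x. (f has_real_derivative f' x) (at x) \<and> f' x \<le> - \<kappa> / (1+x)) (at_right (-1))"
  shows "eventually (\<lambda>x. f x > M) (at_right (-1))"
proof -
  obtain b where b: "b > -1" and hb: "\<And>y. y > -1 \<Longrightarrow> y < b \<Longrightarrow>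
      (f has_real_derivative f' y) (at y) \<and> f' y \<le> - \<kappa> / (1+y)"
    using ev unfolding eventually_at_right_field by auto
  define b0 where "b0 = (b - 1) / 2"
  have b0: "-1 < b0" "b0 < b" using b by (auto simp: b0_def)
  define F where "F x = f x + \<kappa> * ln (1+x)" for x
  have mono: "f x \<ge> f b0 + \<kappa> * ln (1+b0) - \<kappa> * ln (1+x)" if x: "-1 < x" "x \<le> b0" for x
  proof -
    have "F b0 \<le> F x"
    proof (rule DERIV_nonpos_imp_nonincreasing[OF x(2)])
      fix y assume y: "x \<le> y" "y \<le> b0"
      have y1: "y > -1" "y < b" using x y b0 by auto
      have d: "(F has_real_derivative f' y + \<kappa> * (1 / (1+y))) (at y)"
        unfolding F_def using y1 hb[OF y1]
        by (auto intro!: derivative_eq_intros)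
      have "f' y + \<kappa> * (1 / (1+y)) \<le> 0" using hb[OF y1] by simp
      then show "\<exists>l. (F has_real_derivative l) (at y) \<and> l \<le> 0" using d by blast
    qed
    then show ?thesis unfolding F_def by simp
  qed
  have e1: "eventually (\<lambda>x. ln (1+x) < (f b0 + \<kappa> * ln (1+b0) - M) / \<kappa>) (at_right (-1))"
    using ln_shift_bot unfolding filterlim_at_bot_dense by blast
  have e2: "eventually (\<lambda>x. -1 < x \<and> x < b0) (at_right (-1))"
    using eventually_at_right_real[OF b0(1)] by simp
  show ?thesis using e1 e2
  proof eventually_elim
    case (elim x)
    then have "\<kappa> * ln (1+x) < f b0 + \<kappa> * ln (1+b0) - M"
      using k by (simp add: pos_less_divide_eq mult.commute)
    then show ?case using mono[of x] elim by auto
  qed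
qed

lemma cross:
  fixes f f' :: "real \<Rightarrow> real"
  assumes le: "x1 \<le> x2"
    and d: "\<And>x. x1 \<le> x \<Longrightarrow> x \<le> x2 \<Longrightarrow> (f has_real_derivative f' x) (at x)"
    and pos: "\<And>x. x1 \<le> x \<Longrightarrow> x \<le> x2 \<Longrightarrow> f x = v \<Longrightarrow> f' x > 0"
    and st: "f x1 \<ge> v"
  shows "f x2 \<ge> v"
proof (rule ccontr)
  assume neg: "\<not> v \<le> f x2"
  have cont: "continuous_on {x1..x2} f"
    using d by (meson DERIV_isCont atLeastAtMost_iff continuous_at_imp_continuous_on)
  define Z where "Z = {x1..x2} \<inter> f -` {v..}"
  have Zc: "closed Z" unfolding Z_def
    by (rule continuous_closed_preimage[OF cont]) auto
  have Zne: "x1 \<in> Z" using st le by (auto simp: Z_def)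
  have Zb: "bdd_above Z" unfolding Z_def by (auto intro: bdd_aboveI[of _ x2])
  define \<sigma> where "\<sigma> = Sup Z"
  have sZ: "\<sigma> \<in> Z" unfolding \<sigma>_def using closed_contains_Sup[OF _ Zb Zc] Zne by auto
  have up: "x \<le> \<sigma>" if "x \<in> Z" for x unfolding \<sigma>_def using Zb that by (simp add: cSup_upper)
  have s1: "x1 \<le> \<sigma>" "\<sigma> \<le> x2" "v \<le> f \<sigma>" using sZ by (auto simp: Z_def)
  have s2: "\<sigma> < x2" using s1 neg by (cases "\<sigma> = x2") auto
  have right: "f x < v" if "\<sigma> < x" "x \<le> x2" for x
  proof (rule ccontr)
    assume "\<not> f x < v"
    then have "x \<in> Z" using that s1 by (auto simp: Z_def)
    then show False using up that by force
  qed
  have fs: "f \<sigma> = v"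
  proof (rule ccontr)
    assume "f \<sigma> \<noteq> v"
    then have gt: "f \<sigma> > v" using s1 by auto
    have "continuous (at \<sigma>) f" using d s1 by (meson DERIV_isCont)
    then obtain e where e: "e > 0" "\<And>y. dist y \<sigma> < e \<Longrightarrow> dist (f y) (f \<sigma>) < f \<sigma> - v"
      unfolding continuous_at_eps_delta using gt by (meson diff_gt_0_iff_gt)
    define y where "y = \<sigma> + min (e/2) (x2 - \<sigma>)"
    have y: "\<sigma> < y" "y \<le> x2" "dist y \<sigma> < e" using e s2 by (auto simp: y_def dist_real_def)
    have "f y > v" using e(2)[OF y(3)] by (auto simp: dist_real_def)
    then show False using right[OF y(1,2)] by simp
  qed
  have "f' \<sigma> > 0" using pos[OF s1(1,2) fs] .
  then obtain e where e: "e > 0" "\<And>h. h > 0 \<Longrightarrow> h < e \<Longrightarrow> f \<sigma> < f (\<sigma> + h)"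
    using DERIV_pos_inc_right[OF d[OF s1(1,2)]] by blast
  define h where "h = min (e/2) (x2 - \<sigma>)"
  have h: "h > 0" "h < e" "\<sigma> + h \<le> x2" using e s2 by (auto simp: h_def)
  show False using e(2)[OF h(1,2)] right[of "\<sigma> + h"] h fs by auto
qed

lemma cross_ev:
  fixes f f' :: "real \<Rightarrow> real"
  assumes ev: "eventually (\<lambda>x. (f has_real_derivative f' x) (at x) \<and> (f x = v \<longrightarrow> f' x > 0)) (at_right (-1))"
  shows "eventually (\<lambda>x. f x \<le> v) (at_right (-1)) \<or> eventually (\<lambda>x. f x \<ge> v) (at_right (-1))"
proof -
  obtain b where b: "b > -1" and hb: "\<And>y. y > -1 \<Longrightarrow> y < b \<Longrightarrow>
      (f has_real_derivative f' y) (at y) \<and> (f y = v \<longrightarrow> f' y > 0)"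
    using ev unfolding eventually_at_right_field by auto
  show ?thesis
  proof (cases "\<exists>x2. -1 < x2 \<and> x2 < b \<and> f x2 < v")
    case True
    then obtain x2 where x2: "-1 < x2" "x2 < b" "f x2 < v" by blast
    have "f x1 \<le> v" if "-1 < x1" "x1 < x2" for x1
    proof (rule ccontr)
      assume "\<not> f x1 \<le> v"
      then have "f x2 \<ge> v"
        by (intro cross[of x1 x2 f f' v]) (use that x2 hb in auto)
      then show False using x2 by simp
    qed
    then have "eventually (\<lambda>x. f x \<le> v) (at_right (-1))"
      unfolding eventually_at_right_field using x2 by auto
    then show ?thesis by simp
  next
    case False
    then have "eventually (\<lambda>x. f x \<ge> v) (at_right (-1))"
      unfolding eventually_at_right_field using b by (metis not_less)
    then show ?thesis by simp
  qed
qed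

lemma ev_ex: "eventually R (at_right (a::real)) \<Longrightarrow> \<exists>x. R x"
  by (metis eventually_happens trivial_limit_at_right_real)

lemma deriv_bound:
  fixes x u n \<kappa> :: real
  assumes "-1 < x" "x < 1" "(1-x)*(1+x)*u = n" "n \<le> -\<kappa>" "\<kappa> > 0"
  shows "u \<le> -(\<kappa>/2)/(1+x)"
proof -
  have u: "u < 0"
  proof (rule ccontr)
    assume "\<not> u < 0"
    then have "u \<ge> 0" by simp
    moreover have "(1-x)*(1+x) \<ge> 0" using assms by (intro mult_nonneg_nonneg) auto
    ultimately have "(1-x)*(1+x)*u \<ge> 0" by (metis mult_nonneg_nonneg)
    then show False using assms by linarith
  qed
  have le: "(1-x)*(1+x) \<le> 2*(1+x)" using assms by (intro mult_right_mono) auto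
  have "2*(1+x)*u \<le> (1-x)*(1+x)*u"
    using mult_right_mono_neg[OF le, of u] u by simp
  then have "(2*(1+x))*u \<le> -\<kappa>" using assms by linarith
  moreover have "2*(1+x) > 0" using assms by simp
  ultimately have "u \<le> (-\<kappa>) / (2*(1+x))" by (simp only: pos_le_divide_eq mult.commute)
  then show ?thesis by simp
qed

lemma two_roots:
  fixes a b c1 :: real
  assumes "2*c1 + 2*a - a\<^sup>2/2 = 0" "2*c1 + 2*b - b\<^sup>2/2 = 0" "a \<noteq> b"
  shows "a + b = 4"
proof -
  have "(a - b) * (2 - (a+b)/2) = (2*c1 + 2*a - a\<^sup>2/2) - (2*c1 + 2*b - b\<^sup>2/2)"
    by (simp add: field_simps power2_eq_square)
  also have "\<dots> = 0" using assms by simp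
  finally have "(a - b) * (2 - (a+b)/2) = 0" .
  then show ?thesis using assms(3) by simp
qed

lemma arith_high:
  fixes u x qx c1 K M Q :: real
  assumes "-1 < x" "x < 1" "qx \<le> Q" "Q \<ge> 0" "2*c1 + 2*Q \<le> K" "K \<ge> 0"
    "M = 16 + K" "u \<ge> M"
  shows "(2*c1 + 2*u - u\<^sup>2/2) + (1+x)*(qx - 2*u) \<le> -(u\<^sup>2/4)"
proof -
  have u16: "u \<ge> 16" using assms by linarith
  have h1: "(1+x)*qx \<le> 2*Q"
  proof -
    have "(1+x)*qx \<le> (1+x)*Q" using assms by (intro mult_left_mono) auto
    also have "\<dots> \<le> 2*Q" using assms by (intro mult_right_mono) auto
    finally show ?thesis .
  qed
  have h2: "(1+x)*u \<ge> 0" using assms u16 by simp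
  have h3: "u*u \<ge> M*u" using assms u16 by (intro mult_right_mono) auto
  have h4: "K*u \<ge> K*16" using assms u16 by (intro mult_left_mono) auto
  have e1: "M*u = 16*u + K*u" using assms by (simp add: algebra_simps)
  have e2: "(1+x)*(qx - 2*u) = (1+x)*qx - 2*((1+x)*u)" by (simp add: algebra_simps)
  have e3: "u\<^sup>2 = u*u" by (simp add: power2_eq_square)
  show ?thesis unfolding e2 e3 using h1 h2 h3 h4 assms(5,6) e1 u16 by linarith
qed

lemma arith_low:
  fixes u x qx c1 K M Q :: real
  assumes "-1 < x" "x < 1" "qx \<le> Q" "Q \<ge> 0" "2*c1 + 2*Q \<le> K" "K \<ge> 0"
    "M = 16 + K" "u \<le> -M"
  shows "(2*c1 + 2*u - u\<^sup>2/2) + (1+x)*(qx - 2*u) \<le> -1"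
proof -
  have u16: "-u \<ge> 16" using assms by linarith
  have h1: "(1+x)*qx \<le> 2*Q"
  proof -
    have "(1+x)*qx \<le> (1+x)*Q" using assms by (intro mult_left_mono) auto
    also have "\<dots> \<le> 2*Q" using assms by (intro mult_right_mono) auto
    finally show ?thesis .
  qed
  have h2: "(1+x)*(-u) \<le> 2*(-u)" using assms u16 by (intro mult_right_mono) auto
  have h3: "(-u)*(-u) \<ge> M*(-u)" using assms u16 by (intro mult_right_mono) auto
  have h4: "K*(-u) \<ge> K*16" using assms u16 by (intro mult_left_mono) auto
  have e1: "M*(-u) = 16*(-u) + K*(-u)" using assms by (simp add: algebra_simps)
  have e2: "(1+x)*(qx - 2*u) = (1+x)*qx + 2*((1+x)*(-u))" by (simp add: algebra_simps)
  have e3: "u\<^sup>2 = (-u)*(-u)" by (simp add: power2_eq_square)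
  show ?thesis unfolding e2 e3 using h1 h2 h3 h4 assms(5,6) e1 u16 by linarith
qed

theorem lemma2p1:
  fixes \<delta> c1 c2 c3 :: real and U U' :: "real \<Rightarrow> real"
  assumes "\<delta> > 0"
    and deriv: "\<And>x. x \<in> {-1<..<-1+\<delta>} \<Longrightarrow> (U has_real_derivative U' x) (at x)"
    and cont: "continuous_on {-1<..<-1+\<delta>} U'"
    and ode: "\<And>x. x \<in> {-1<..<-1+\<delta>} \<Longrightarrow>
               (1 - x\<^sup>2) * U' x + 2 * x * U x + 1/2 * (U x)\<^sup>2 = P c1 c2 c3 x"
  shows "c1 \<ge> -1 \<and> (\<exists>L. (U \<longlongrightarrow> L) (at_right (-1)) \<and> (L = tau1 c1 \<or> L = tau2 c1))"
proof -
  define g where "g u = 2*c1 + 2*u - u\<^sup>2/2" for u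
  define q where "q x = c2 - c1 + c3*(1-x)" for x
  define N where "N x = g (U x) + (1+x)*(q x - 2*U x)" for x
  define Q where "Q = \<bar>c1\<bar> + \<bar>c2\<bar> + 2*\<bar>c3\<bar>"
  define K where "K = 4*\<bar>c1\<bar> + 2*\<bar>c2\<bar> + 4*\<bar>c3\<bar>"
  define M where "M = 16 + K"
  have Q0: "Q \<ge> 0" and K0: "K \<ge> 0" and QK: "2*c1 + 2*Q \<le> K" by (auto simp: Q_def K_def)
  have qb: "q x \<le> Q" if "-1 < x" "x < 1" for x
  proof -
    have "c3*(1-x) \<le> \<bar>c3\<bar>*\<bar>1-x\<bar>" by (simp add: abs_mult[symmetric])
    also have "\<dots> \<le> \<bar>c3\<bar>*2" using that by (intro mult_left_mono) auto
    finally show ?thesis unfolding q_def Q_def by linarith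
  qed
  have Nid: "(1-x)*(1+x)*U' x = N x" if x: "x \<in> {-1<..<-1+\<delta>}" for x
  proof -
    have "(1-x)*(1+x)*U' x = P c1 c2 c3 x - 2*x*U x - 1/2*(U x)\<^sup>2"
      using ode[OF x] by (simp add: power2_eq_square algebra_simps)
    also have "\<dots> = N x" unfolding N_def g_def q_def P_def
      by (simp add: power2_eq_square algebra_simps)
    finally show ?thesis .
  qed
  have evd: "eventually (\<lambda>x. -1 < x \<and> x < 1 \<and> (U has_real_derivative U' x) (at x) \<and>
      (1-x)*(1+x)*U' x = N x) (at_right (-1))"
  proof -
    have "eventually (\<lambda>x. x \<in> {-1<..<min (-1+\<delta>) 1}) (at_right (-1))"
      by (rule eventually_at_right_real) (use assms(1) in auto)
    then show ?thesis
    proof eventually_elim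
      case (elim x)
      then have "x \<in> {-1<..<-1+\<delta>}" by auto
      then show ?case using elim deriv Nid by auto
    qed
  qed
  have stepA: "\<not> eventually (\<lambda>x. U x \<ge> M) (at_right (-1))"
  proof
    assume ev: "eventually (\<lambda>x. U x \<ge> M) (at_right (-1))"
    have "eventually (\<lambda>x. ((\<lambda>x. -1 / U x) has_real_derivative U' x / (U x)\<^sup>2) (at x)
        \<and> U' x / (U x)\<^sup>2 \<le> - (1/8) / (1+x)) (at_right (-1))"
      using ev evd
    proof eventually_elim
      case (elim x)
      then have x: "-1 < x" "x < 1" and Ux: "U x \<ge> M" by auto
      have Mp: "M > 0" using K0 by (simp add: M_def)
      have Upos: "U x > 0" using Ux Mp by linarith
      have "N x \<le> -((U x)\<^sup>2/4)" unfolding N_def g_def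
        by (rule arith_high[OF x qb[OF x] Q0 QK K0 M_def Ux])
      then have b: "U' x \<le> -(((U x)\<^sup>2/4)/2)/(1+x)"
        using elim Upos by (intro deriv_bound[OF x, of _ "N x"]) auto
      have "U' x / (U x)\<^sup>2 \<le> (-(((U x)\<^sup>2/4)/2)/(1+x)) / (U x)\<^sup>2"
        using b Upos by (intro divide_right_mono) auto
      also have "\<dots> = - (1/8) / (1+x)"
      proof -
        have s: "1 + x > 0" "(U x)\<^sup>2 > 0" using x Upos by auto
        have "\<And>a s::real. a > 0 \<Longrightarrow> s > 0 \<Longrightarrow> (-((a/4)/2)/s)/a = -(1/8)/s"
          by (simp add: divide_simps)
        from this[OF s(2,1)] show ?thesis .
      qed
      finally have le: "U' x / (U x)\<^sup>2 \<le> - (1/8) / (1+x)" .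
      have "((\<lambda>x. -1 / U x) has_real_derivative U' x / (U x)\<^sup>2) (at x)"
        using elim Upos by (auto intro!: derivative_eq_intros simp: power2_eq_square)
      then show ?case using le by simp
    qed
    from drift[of "1/8", OF _ this, of 0] have "eventually (\<lambda>x. -1 / U x > 0) (at_right (-1))" by simp
    then obtain x where "-1 / U x > 0" "U x \<ge> M" using ev ev_ex[OF eventually_conj] by blast
    moreover have "M > 0" using K0 by (simp add: M_def)
    ultimately show False by (simp add: divide_less_0_iff)
  qed
  have Upos_imp: "w > 0" if "-1 < x" "x < 1" "(1-x)*(1+x)*w = n" "n > 0" for x n w :: real
  proof (rule ccontr)
    assume "\<not> w > 0"
    then have "w \<le> 0" by simp
    moreover have "(1-x)*(1+x) \<ge> 0" using that by (intro mult_nonneg_nonneg) auto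
    ultimately have "(1-x)*(1+x)*w \<le> 0" by (metis mult_nonneg_nonpos)
    then show False using that by linarith
  qed
  have cU: "eventually (\<lambda>x. U x \<le> v) (at_right (-1)) \<or> eventually (\<lambda>x. U x \<ge> v) (at_right (-1))"
    if gv: "g v \<noteq> 0" for v
  proof -
    have "((\<lambda>x. (1+x)*(q x - 2* v)) \<longlongrightarrow> (1+(-1))*(q (-1) - 2* v)) (at_right (-1))"
      unfolding q_def by (intro tendsto_intros)
    then have "((\<lambda>x. (1+x)*(q x - 2* v)) \<longlongrightarrow> 0) (at_right (-1))" by simp
    then have small: "eventually (\<lambda>x. \<bar>(1+x)*(q x - 2* v)\<bar> < \<bar>g v\<bar>) (at_right (-1))"
      using gv unfolding tendsto_iff dist_real_def by force
    show ?thesis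
    proof (cases "g v > 0")
      case True
      have "eventually (\<lambda>x. (U has_real_derivative U' x) (at x) \<and> (U x = v \<longrightarrow> U' x > 0)) (at_right (-1))"
        using small evd
      proof eventually_elim
        case (elim x)
        have "U x = v \<Longrightarrow> N x > 0" using elim True unfolding N_def by auto
        then show ?case using elim Upos_imp[of x "U' x" "N x"] by auto
      qed
      then show ?thesis by (rule cross_ev)
    next
      case False
      then have gneg: "g v < 0" using gv by simp
      have "eventually (\<lambda>x. ((\<lambda>x. - U x) has_real_derivative - U' x) (at x) \<and> (- U x = - v \<longrightarrow> - U' x > 0)) (at_right (-1))"
        using small evd
      proof eventually_elim
        case (elim x)
        have "U x = v \<Longrightarrow> - N x > 0" using elim gneg unfolding N_def by auto
        moreover have "(1-x)*(1+x)*(- U' x) = - N x" using elim by simp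
        ultimately show ?case using elim Upos_imp[of x "- U' x" "- N x"] by (auto intro!: derivative_eq_intros)
      qed
      then have "eventually (\<lambda>x. - U x \<le> - v) (at_right (-1)) \<or> eventually (\<lambda>x. - U x \<ge> - v) (at_right (-1))"
        by (rule cross_ev)
      then show ?thesis by auto
    qed
  qed
  define S where "S = {v. eventually (\<lambda>x. U x \<le> v) (at_right (-1))}"
  have Mp: "M \<ge> 16" using K0 by (simp add: M_def)
  have MS: "M \<in> S"
  proof -
    have "M*M \<ge> 16*M" using Mp by (intro mult_right_mono) auto
    moreover have "g M = 2*c1 + 2*M - (M*M)/2" by (simp add: g_def power2_eq_square)
    ultimately have gM: "g M < 0" using QK Q0 K0 M_def by linarith
    then show ?thesis using cU[of M] stepA by (auto simp: S_def)
  qed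
  have Slow: "v \<ge> -M" if "v \<in> S" for v
  proof (rule ccontr)
    assume "\<not> v \<ge> -M"
    then have vM: "v \<le> -M" by simp
    have ev: "eventually (\<lambda>x. U x \<le> v) (at_right (-1))" using that by (simp add: S_def)
    have "eventually (\<lambda>x. (U has_real_derivative U' x) (at x) \<and> U' x \<le> -(1/2) / (1+x)) (at_right (-1))"
      using ev evd
    proof eventually_elim
      case (elim x)
      then have x: "-1 < x" "x < 1" and Ux: "U x \<le> -M" using vM by auto
      have "N x \<le> -1" unfolding N_def g_def
        by (rule arith_low[OF x qb[OF x] Q0 QK K0 M_def Ux])
      then have "U' x \<le> -(1/2)/(1+x)"
        using elim by (intro deriv_bound[OF x, of _ "N x"]) auto
      then show ?case using elim by simp
    qed
    from drift[of "1/2", OF _ this, of v] have "eventually (\<lambda>x. U x > v) (at_right (-1))" by simp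
    then obtain x where "U x > v" "U x \<le> v" using ev ev_ex[OF eventually_conj] by blast
    then show False by simp
  qed
  define L where "L = Inf S"
  have Sne: "S \<noteq> {}" using MS by auto
  have Sbdd: "bdd_below S" using Slow by (metis bdd_belowI)
  have lim: "(U \<longlongrightarrow> L) (at_right (-1))"
    unfolding tendsto_iff
  proof (intro allI impI)
    fix \<epsilon> :: real assume e: "\<epsilon> > 0"
    obtain v where v: "v \<in> S" "v < L + \<epsilon>"
      using cInf_lessD[OF Sne, of "L + \<epsilon>"] e by (auto simp: L_def)
    have "\<exists>w. L - \<epsilon> < w \<and> w < L \<and> g w \<noteq> 0"
    proof (rule ccontr)
      assume "\<not> ?thesis"
      then have r: "g (L - \<epsilon>/2) = 0" "g (L - \<epsilon>/3) = 0" "g (L - \<epsilon>/4) = 0" using e by auto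
      have "(L - \<epsilon>/2) + (L - \<epsilon>/3) = 4"
        by (rule two_roots[of c1]) (use r e in \<open>auto simp: g_def\<close>)
      moreover have "(L - \<epsilon>/2) + (L - \<epsilon>/4) = 4"
        by (rule two_roots[of c1]) (use r e in \<open>auto simp: g_def\<close>)
      ultimately show False using e by simp
    qed
    then obtain w where w: "L - \<epsilon> < w" "w < L" "g w \<noteq> 0" by blast
    have "w \<notin> S"
    proof
      assume "w \<in> S"
      then have "L \<le> w" unfolding L_def using Sbdd by (simp add: cInf_lower)
      then show False using w by simp
    qed
    then have evw: "eventually (\<lambda>x. U x \<ge> w) (at_right (-1))" using cU[OF w(3)] by (auto simp: S_def)
    have evv: "eventually (\<lambda>x. U x \<le> v) (at_right (-1))" using v by (simp add: S_def)
    show "eventually (\<lambda>x. dist (U x) L < \<epsilon>) (at_right (-1))"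
      using evw evv
    proof eventually_elim
      case (elim x)
      then show ?case using v w by (auto simp: dist_real_def abs_less_iff)
    qed
  qed
  have Nlim: "(N \<longlongrightarrow> g L) (at_right (-1))"
  proof -
    have "(N \<longlongrightarrow> (2*c1 + 2*L - L\<^sup>2/2) + (1+(-1))*((c2 - c1 + c3*(1-(-1))) - 2*L)) (at_right (-1))"
      unfolding N_def g_def q_def by (intro tendsto_intros lim) simp_all
    then show ?thesis by (simp add: g_def)
  qed
  have gL: "g L = 0"
  proof (rule ccontr)
    assume gne: "g L \<noteq> 0"
    show False
    proof (cases "g L < 0")
      case True
      have evN: "eventually (\<lambda>x. N x < g L / 2) (at_right (-1))"
        using order_tendstoD(2)[OF Nlim, of "g L / 2"] True by linarith
      have "eventually (\<lambda>x. (U has_real_derivative U' x) (at x) \<and> U' x \<le> -((- g L / 2)/2) / (1+x)) (at_right (-1))"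
        using evN evd
      proof eventually_elim
        case (elim x)
        then have x: "-1 < x" "x < 1" by auto
        have "U' x \<le> -((- g L / 2)/2)/(1+x)"
          using elim True by (intro deriv_bound[OF x, of _ "N x"]) auto
        then show ?case using elim by simp
      qed
      from drift[OF _ this, of "L+1"] True
      have e1: "eventually (\<lambda>x. U x > L + 1) (at_right (-1))" by simp
      have e2: "eventually (\<lambda>x. U x < L + 1) (at_right (-1))"
        using order_tendstoD(2)[OF lim, of "L + 1"] by simp
      obtain x where "U x > L + 1" "U x < L + 1" using ev_ex[OF eventually_conj[OF e1 e2]] by blast
      then show False by simp
    next
      case False
      then have True: "g L > 0" using gne by simp
      have evN: "eventually (\<lambda>x. N x > g L / 2) (at_right (-1))"
        using order_tendstoD(1)[OF Nlim, of "g L / 2"] True by linarith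
      have "eventually (\<lambda>x. ((\<lambda>x. - U x) has_real_derivative - U' x) (at x) \<and> - U' x \<le> -((g L / 2)/2) / (1+x)) (at_right (-1))"
        using evN evd
      proof eventually_elim
        case (elim x)
        then have x: "-1 < x" "x < 1" by auto
        have "(1-x)*(1+x)*(- U' x) = - N x" using elim by simp
        then have "- U' x \<le> -((g L / 2)/2)/(1+x)"
          using elim True by (intro deriv_bound[OF x, of _ "- N x"]) auto
        then show ?case using elim by (auto intro!: derivative_eq_intros)
      qed
      from drift[OF _ this, of "1 - L"] True
      have e1: "eventually (\<lambda>x. - U x > 1 - L) (at_right (-1))" by simp
      have e2: "eventually (\<lambda>x. U x > L - 1) (at_right (-1))"
        using order_tendstoD(1)[OF lim, of "L - 1"] by simp
      obtain x where "- U x > 1 - L" "U x > L - 1" using ev_ex[OF eventually_conj[OF e1 e2]] by blast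
      then show False by simp
    qed
  qed
  have sq: "1 + c1 = ((L - 2)/2)\<^sup>2" using gL unfolding g_def by (simp add: power2_eq_square field_simps)
  have "((L - 2)/2)\<^sup>2 \<ge> 0" by simp
  then have c1: "c1 \<ge> -1" using sq by linarith
  have sr: "sqrt (1 + c1) = \<bar>L - 2\<bar>/2" using sq by (simp add: real_sqrt_abs)
  have "L = tau1 c1 \<or> L = tau2 c1" unfolding tau1_def tau2_def sr by (cases "L \<ge> 2") (auto simp: field_simps)
  then show ?thesis using c1 lim by blast
qed

end
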